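(* Suppose $V \models \mathsf{ZFC}^- + \mathsf{DC}_{<\mathrm{Ord}}$. Then for any proper class $\mathcal{C}$ definable over $V$ and any non-zero ordinal $\gamma$, there is a definable surjection of $\mathcal{C}$ onto $\gamma$.
   Context: $\mathsf{ZFC}^-$ denotes the theory with axioms Empty Set, Extensionality, Pairing, Union, Infinity, the Foundation, Separation, Replacement and Collection Schemes, and the Well-Ordering Principle (no Power Set). $\mathsf{ZFC}^- + \mathsf{DC}_{<\mathrm{Ord}}$ is $\mathsf{ZFC}^-$ together with the $\mathsf{DC}_\mu$-Scheme for every infinite cardinal $\mu$, where the $\mathsf{DC}_\mu$-Scheme states: for all formulas $\varphi,\psi$ and sets $u,w$, if there is $y$ with $\psi(y,u)$ and for every $\alpha < \mu$ and every sequence $s = \langle x_\beta : \beta < \alpha\rangle$ with $\psi(x_\beta,u)$ for all $\beta$ there is $z$ with $\psi(z,u)$ and $\varphi(s,z,w)$, then there is a function $f$ with domain $\mu$ such that for each $\alpha < \mu$, $\psi(f(\alpha),u)$ and $\varphi(f\restriction\alpha, f(\alpha), w)$. *)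

theory Defs
  imports Main
begin

section \<open>First-order language of set theory (deep embedding)\<close>

text \<open>Formulas of the language {\<in>} with named variables (natural numbers).
  A structure is a type 'a together with a binary relation E (membership).\<close>

datatype fm = FMem nat nat | FEq nat nat | FNeg fm | FConj fm fm | FEx nat fm

fun sat :: "('a \<Rightarrow> 'a \<Rightarrow> bool) \<Rightarrow> (nat \<Rightarrow> 'a) \<Rightarrow> fm \<Rightarrow> bool" where
  "sat E s (FMem i j) = E (s i) (s j)"
| "sat E s (FEq i j) = (s i = s j)"
| "sat E s (FNeg p) = (\<not> sat E s p)"
| "sat E s (FConj p q) = (sat E s p \<and> sat E s q)"
| "sat E s (FEx x p) = (\<exists>a. sat E (s(x := a)) p)"

text \<open>The class defined by formula p with parameters given by assignment s
  (variable 0 is the free variable of the class).\<close>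
definition defcl :: "('a \<Rightarrow> 'a \<Rightarrow> bool) \<Rightarrow> fm \<Rightarrow> (nat \<Rightarrow> 'a) \<Rightarrow> 'a set" where
  "defcl E p s = {a. sat E (s(0 := a)) p}"

definition is_set_cl :: "('a \<Rightarrow> 'a \<Rightarrow> bool) \<Rightarrow> 'a set \<Rightarrow> bool" where
  "is_set_cl E C \<longleftrightarrow> (\<exists>b. \<forall>x. x \<in> C \<longleftrightarrow> E x b)"

definition proper_class :: "('a \<Rightarrow> 'a \<Rightarrow> bool) \<Rightarrow> 'a set \<Rightarrow> bool" where
  "proper_class E C \<longleftrightarrow> \<not> is_set_cl E C"

definition is_empty :: "('a \<Rightarrow> 'a \<Rightarrow> bool) \<Rightarrow> 'a \<Rightarrow> bool" where
  "is_empty E e \<longleftrightarrow> (\<forall>z. \<not> E z e)"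

definition subset_in :: "('a \<Rightarrow> 'a \<Rightarrow> bool) \<Rightarrow> 'a \<Rightarrow> 'a \<Rightarrow> bool" where
  "subset_in E y x \<longleftrightarrow> (\<forall>z. E z y \<longrightarrow> E z x)"

definition upair_in :: "('a \<Rightarrow> 'a \<Rightarrow> bool) \<Rightarrow> 'a \<Rightarrow> 'a \<Rightarrow> 'a \<Rightarrow> bool" where
  "upair_in E u a b \<longleftrightarrow> (\<forall>z. E z u \<longleftrightarrow> z = a \<or> z = b)"

definition pair_in :: "('a \<Rightarrow> 'a \<Rightarrow> bool) \<Rightarrow> 'a \<Rightarrow> 'a \<Rightarrow> 'a \<Rightarrow> bool" where
  "pair_in E p a b \<longleftrightarrow> (\<forall>z. E z p \<longleftrightarrow> upair_in E z a a \<or> upair_in E z a b)"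

definition rel_in :: "('a \<Rightarrow> 'a \<Rightarrow> bool) \<Rightarrow> 'a \<Rightarrow> 'a \<Rightarrow> 'a \<Rightarrow> bool" where
  "rel_in E r a b \<longleftrightarrow> (\<exists>p. E p r \<and> pair_in E p a b)"

definition wellorders_in :: "('a \<Rightarrow> 'a \<Rightarrow> bool) \<Rightarrow> 'a \<Rightarrow> 'a \<Rightarrow> bool" where
  "wellorders_in E r x \<longleftrightarrow>
     (\<forall>a. E a x \<longrightarrow> \<not> rel_in E r a a) \<and>
     (\<forall>a b c. E a x \<and> E b x \<and> E c x \<and> rel_in E r a b \<and> rel_in E r b c \<longrightarrow> rel_in E r a c) \<and>
     (\<forall>a b. E a x \<and> E b x \<longrightarrow> rel_in E r a b \<or> a = b \<or> rel_in E r b a) \<and>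
     (\<forall>y. subset_in E y x \<and> (\<exists>z. E z y) \<longrightarrow>
          (\<exists>m. E m y \<and> (\<forall>z. E z y \<longrightarrow> \<not> rel_in E r z m)))"

definition transitive_in :: "('a \<Rightarrow> 'a \<Rightarrow> bool) \<Rightarrow> 'a \<Rightarrow> bool" where
  "transitive_in E x \<longleftrightarrow> (\<forall>y z. E z y \<and> E y x \<longrightarrow> E z x)"

definition ordinal_in :: "('a \<Rightarrow> 'a \<Rightarrow> bool) \<Rightarrow> 'a \<Rightarrow> bool" where
  "ordinal_in E x \<longleftrightarrow> transitive_in E x \<and>
     (\<forall>a. E a x \<longrightarrow> \<not> E a a) \<and>
     (\<forall>a b c. E a x \<and> E b x \<and> E c x \<and> E a b \<and> E b c \<longrightarrow> E a c) \<and>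
     (\<forall>a b. E a x \<and> E b x \<longrightarrow> E a b \<or> a = b \<or> E b a) \<and>
     (\<forall>y. subset_in E y x \<and> (\<exists>z. E z y) \<longrightarrow> (\<exists>m. E m y \<and> (\<forall>z. E z y \<longrightarrow> \<not> E z m)))"

definition succ_in :: "('a \<Rightarrow> 'a \<Rightarrow> bool) \<Rightarrow> 'a \<Rightarrow> 'a \<Rightarrow> bool" where
  "succ_in E y x \<longleftrightarrow> (\<forall>z. E z y \<longleftrightarrow> E z x \<or> z = x)"

definition zero_or_succ_in :: "('a \<Rightarrow> 'a \<Rightarrow> bool) \<Rightarrow> 'a \<Rightarrow> bool" where
  "zero_or_succ_in E x \<longleftrightarrow> is_empty E x \<or> (\<exists>y. succ_in E x y)"

definition nat_in :: "('a \<Rightarrow> 'a \<Rightarrow> bool) \<Rightarrow> 'a \<Rightarrow> bool" where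
  "nat_in E x \<longleftrightarrow> ordinal_in E x \<and> zero_or_succ_in E x \<and> (\<forall>y. E y x \<longrightarrow> zero_or_succ_in E y)"

definition fun_on_in :: "('a \<Rightarrow> 'a \<Rightarrow> bool) \<Rightarrow> 'a \<Rightarrow> 'a \<Rightarrow> bool" where
  "fun_on_in E f d \<longleftrightarrow>
     (\<forall>p. E p f \<longrightarrow> (\<exists>a b. pair_in E p a b \<and> E a d)) \<and>
     (\<forall>a. E a d \<longrightarrow> (\<exists>!b. rel_in E f a b))"

definition bij_in :: "('a \<Rightarrow> 'a \<Rightarrow> bool) \<Rightarrow> 'a \<Rightarrow> 'a \<Rightarrow> 'a \<Rightarrow> bool" where
  "bij_in E f d c \<longleftrightarrow> fun_on_in E f d \<and>
     (\<forall>a a' b. rel_in E f a b \<and> rel_in E f a' b \<longrightarrow> a = a') \<and>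
     (\<forall>a b. rel_in E f a b \<longrightarrow> E b c) \<and>
     (\<forall>b. E b c \<longrightarrow> (\<exists>a. rel_in E f a b))"

definition cardinal_in :: "('a \<Rightarrow> 'a \<Rightarrow> bool) \<Rightarrow> 'a \<Rightarrow> bool" where
  "cardinal_in E m \<longleftrightarrow> ordinal_in E m \<and> (\<forall>b f. E b m \<longrightarrow> \<not> bij_in E f b m)"

definition inf_cardinal_in :: "('a \<Rightarrow> 'a \<Rightarrow> bool) \<Rightarrow> 'a \<Rightarrow> bool" where
  "inf_cardinal_in E m \<longleftrightarrow> cardinal_in E m \<and> \<not> nat_in E m"

definition restr_in :: "('a \<Rightarrow> 'a \<Rightarrow> bool) \<Rightarrow> 'a \<Rightarrow> 'a \<Rightarrow> 'a \<Rightarrow> bool" where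
  "restr_in E g f a \<longleftrightarrow> (\<forall>p. E p g \<longleftrightarrow> E p f \<and> (\<exists>x y. pair_in E p x y \<and> E x a))"

section \<open>Axioms of ZFC^- + DC_{<Ord}, stated semantically (schemes range over all formulas
  and all parameter assignments)\<close>

definition ax_extensionality :: "('a \<Rightarrow> 'a \<Rightarrow> bool) \<Rightarrow> bool" where
  "ax_extensionality E \<longleftrightarrow> (\<forall>x y. (\<forall>z. E z x \<longleftrightarrow> E z y) \<longrightarrow> x = y)"

definition ax_empty :: "('a \<Rightarrow> 'a \<Rightarrow> bool) \<Rightarrow> bool" where
  "ax_empty E \<longleftrightarrow> (\<exists>e. is_empty E e)"

definition ax_pairing :: "('a \<Rightarrow> 'a \<Rightarrow> bool) \<Rightarrow> bool" where
  "ax_pairing E \<longleftrightarrow> (\<forall>a b. \<exists>u. upair_in E u a b)"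

definition ax_union :: "('a \<Rightarrow> 'a \<Rightarrow> bool) \<Rightarrow> bool" where
  "ax_union E \<longleftrightarrow> (\<forall>x. \<exists>u. \<forall>z. E z u \<longleftrightarrow> (\<exists>y. E y x \<and> E z y))"

definition ax_infinity :: "('a \<Rightarrow> 'a \<Rightarrow> bool) \<Rightarrow> bool" where
  "ax_infinity E \<longleftrightarrow> (\<exists>i. (\<exists>e. is_empty E e \<and> E e i) \<and>
                          (\<forall>y. E y i \<longrightarrow> (\<exists>z. succ_in E z y \<and> E z i)))"

definition ax_foundation :: "('a \<Rightarrow> 'a \<Rightarrow> bool) \<Rightarrow> bool" where
  "ax_foundation E \<longleftrightarrow> (\<forall>p s. defcl E p s \<noteq> {} \<longrightarrow>
      (\<exists>y \<in> defcl E p s. \<forall>z \<in> defcl E p s. \<not> E z y))"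

definition ax_separation :: "('a \<Rightarrow> 'a \<Rightarrow> bool) \<Rightarrow> bool" where
  "ax_separation E \<longleftrightarrow> (\<forall>p s a. \<exists>b. \<forall>x. E x b \<longleftrightarrow> E x a \<and> sat E (s(0 := x)) p)"

definition ax_replacement :: "('a \<Rightarrow> 'a \<Rightarrow> bool) \<Rightarrow> bool" where
  "ax_replacement E \<longleftrightarrow> (\<forall>p s a.
     (\<forall>x. E x a \<longrightarrow> (\<exists>!y. sat E (s(0 := x, 1 := y)) p)) \<longrightarrow>
     (\<exists>b. \<forall>y. E y b \<longleftrightarrow> (\<exists>x. E x a \<and> sat E (s(0 := x, 1 := y)) p)))"

definition ax_collection :: "('a \<Rightarrow> 'a \<Rightarrow> bool) \<Rightarrow> bool" where
  "ax_collection E \<longleftrightarrow> (\<forall>p s a.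
     (\<forall>x. E x a \<longrightarrow> (\<exists>y. sat E (s(0 := x, 1 := y)) p)) \<longrightarrow>
     (\<exists>b. \<forall>x. E x a \<longrightarrow> (\<exists>y. E y b \<and> sat E (s(0 := x, 1 := y)) p)))"

definition ax_wellordering :: "('a \<Rightarrow> 'a \<Rightarrow> bool) \<Rightarrow> bool" where
  "ax_wellordering E \<longleftrightarrow> (\<forall>x. \<exists>r. wellorders_in E r x)"

text \<open>DC_mu scheme: psi(y) is the formula p with y at variable 0, phi(s,z) is the formula q
  with s at variable 0 and z at variable 1; the remaining variables are parameters (u, w).\<close>
definition ax_DC :: "('a \<Rightarrow> 'a \<Rightarrow> bool) \<Rightarrow> 'a \<Rightarrow> bool" where
  "ax_DC E \<mu> \<longleftrightarrow> (\<forall>q p t.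
     ((\<exists>y. sat E (t(0 := y)) p) \<and>
      (\<forall>\<alpha> sq. E \<alpha> \<mu> \<and> fun_on_in E sq \<alpha> \<and>
               (\<forall>\<beta> x. E \<beta> \<alpha> \<and> rel_in E sq \<beta> x \<longrightarrow> sat E (t(0 := x)) p) \<longrightarrow>
               (\<exists>z. sat E (t(0 := z)) p \<and> sat E (t(0 := sq, 1 := z)) q)))
     \<longrightarrow> (\<exists>f. fun_on_in E f \<mu> \<and>
            (\<forall>\<alpha> x. E \<alpha> \<mu> \<and> rel_in E f \<alpha> x \<longrightarrow>
               sat E (t(0 := x)) p \<and> (\<exists>g. restr_in E g f \<alpha> \<and> sat E (t(0 := g, 1 := x)) q))))"

definition ZFCm_DC :: "('a \<Rightarrow> 'a \<Rightarrow> bool) \<Rightarrow> bool" where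
  "ZFCm_DC E \<longleftrightarrow> ax_empty E \<and> ax_extensionality E \<and> ax_pairing E \<and> ax_union E \<and>
     ax_infinity E \<and> ax_foundation E \<and> ax_separation E \<and> ax_replacement E \<and>
     ax_collection E \<and> ax_wellordering E \<and> (\<forall>\<mu>. inf_cardinal_in E \<mu> \<longrightarrow> ax_DC E \<mu>)"

text \<open>The class relation defined by q with parameters t (variables 0 and 1 are the
  argument and value) is a surjection of the class C onto the set gamma.\<close>
definition def_surj_onto :: "('a \<Rightarrow> 'a \<Rightarrow> bool) \<Rightarrow> fm \<Rightarrow> (nat \<Rightarrow> 'a) \<Rightarrow> 'a set \<Rightarrow> 'a \<Rightarrow> bool" where
  "def_surj_onto E q t C \<gamma> \<longleftrightarrow>
     (\<forall>a b. sat E (t(0 := a, 1 := b)) q \<longrightarrow> a \<in> C \<and> E b \<gamma>) \<and>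
     (\<forall>a \<in> C. \<exists>!b. sat E (t(0 := a, 1 := b)) q) \<and>
     (\<forall>b. E b \<gamma> \<longrightarrow> (\<exists>a \<in> C. sat E (t(0 := a, 1 := b)) q))"

end

theory Submission
  imports Defs
begin


definition FOr where "FOr a b = FNeg (FConj (FNeg a) (FNeg b))"
definition FImp where "FImp a b = FNeg (FConj a (FNeg b))"
definition FAll where "FAll x a = FNeg (FEx x (FNeg a))"
definition FIff where "FIff a b = FConj (FImp a b) (FImp b a)"

lemma sat_derived[simp]:
  "sat E s (FOr a b) = (sat E s a \<or> sat E s b)"
  "sat E s (FImp a b) = (sat E s a \<longrightarrow> sat E s b)"
  "sat E s (FAll x a) = (\<forall>v. sat E (s(x:=v)) a)"
  "sat E s (FIff a b) = (sat E s a \<longleftrightarrow> sat E s b)"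
  by (auto simp: FOr_def FImp_def FAll_def FIff_def)

definition nx :: "nat \<Rightarrow> nat \<Rightarrow> nat \<Rightarrow> nat" where "nx a b c = Suc (max a (max b c))"
lemma nx_ne[simp]: "nx a b c \<noteq> a" "nx a b c \<noteq> b" "nx a b c \<noteq> c"
  "a \<noteq> nx a b c" "b \<noteq> nx a b c" "c \<noteq> nx a b c"
  "Suc (nx a b c) \<noteq> a" "Suc (nx a b c) \<noteq> b" "Suc (nx a b c) \<noteq> c"
  "Suc (Suc (nx a b c)) \<noteq> a" "Suc (Suc (nx a b c)) \<noteq> b" "Suc (Suc (nx a b c)) \<noteq> c"
  "a \<noteq> Suc (nx a b c)" "b \<noteq> Suc (nx a b c)" "c \<noteq> Suc (nx a b c)"
  "a \<noteq> Suc (Suc (nx a b c))" "b \<noteq> Suc (Suc (nx a b c))" "c \<noteq> Suc (Suc (nx a b c))"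
  "Suc (Suc (Suc (nx a b c))) \<noteq> a" "a \<noteq> Suc (Suc (Suc (nx a b c)))"
  by (auto simp: nx_def)

definition "fm_upair u a b = (let z = nx u a b in FAll z (FIff (FMem z u) (FOr (FEq z a) (FEq z b))))"
lemma sat_upair[simp]: "sat E s (fm_upair u a b) = upair_in E (s u) (s a) (s b)"
  by (simp add: fm_upair_def Let_def upair_in_def)

definition "fm_pair p a b = (let z = nx p a b in FAll z (FIff (FMem z p) (FOr (fm_upair z a a) (fm_upair z a b))))"
lemma sat_pair[simp]: "sat E s (fm_pair p a b) = pair_in E (s p) (s a) (s b)"
  by (simp add: fm_pair_def Let_def pair_in_def)

definition "fm_rel r a b = (let y = nx r a b in FEx y (FConj (FMem y r) (fm_pair y a b)))"
lemma sat_rel[simp]: "sat E s (fm_rel r a b) = rel_in E (s r) (s a) (s b)"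
  by (simp add: fm_rel_def Let_def rel_in_def)

definition "fm_fun_on f d = (let p = nx f d d; a = Suc p; b = Suc (Suc p) in
   FConj (FAll p (FImp (FMem p f) (FEx a (FEx b (FConj (fm_pair p a b) (FMem a d))))))
         (FAll a (FImp (FMem a d) (FEx b (FConj (fm_rel f a b) (FAll p (FImp (fm_rel f a p) (FEq p b))))))))"
lemma sat_fun_on[simp]: "sat E s (fm_fun_on f d) = fun_on_in E (s f) (s d)"
  unfolding fm_fun_on_def Let_def fun_on_in_def
  apply (simp del: nx_ne add: nx_ne)
  by (metis (no_types, lifting))

definition "fm_empty x = (let z = nx x x x in FAll z (FNeg (FMem z x)))"
lemma sat_empty[simp]: "sat E s (fm_empty x) = is_empty E (s x)"
  by (simp add: fm_empty_def Let_def is_empty_def)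

definition "fm_subset y x = (let z = nx y x x in FAll z (FImp (FMem z y) (FMem z x)))"
lemma sat_subset[simp]: "sat E s (fm_subset y x) = subset_in E (s y) (s x)"
  by (simp add: fm_subset_def Let_def subset_in_def)

definition "fm_succ y x = (let z = nx y x x in FAll z (FIff (FMem z y) (FOr (FMem z x) (FEq z x))))"
lemma sat_succ[simp]: "sat E s (fm_succ y x) = succ_in E (s y) (s x)"
  by (simp add: fm_succ_def Let_def succ_in_def)

definition "fm_zos x = (let y = nx x x x in FOr (fm_empty x) (FEx y (fm_succ x y)))"
lemma sat_zos[simp]: "sat E s (fm_zos x) = zero_or_succ_in E (s x)"
  by (simp add: fm_zos_def Let_def zero_or_succ_in_def)

definition "fm_ordinal x = (let a = nx x x x; b = Suc a; c = Suc b; y = Suc c in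
  FConj (FAll a (FAll b (FImp (FConj (FMem b a) (FMem a x)) (FMem b x))))
  (FConj (FAll a (FImp (FMem a x) (FNeg (FMem a a))))
  (FConj (FAll a (FAll b (FAll c (FImp (FConj (FMem a x) (FConj (FMem b x) (FConj (FMem c x) (FConj (FMem a b) (FMem b c))))) (FMem a c)))))
  (FConj (FAll a (FAll b (FImp (FConj (FMem a x) (FMem b x)) (FOr (FMem a b) (FOr (FEq a b) (FMem b a))))))
   (FAll y (FImp (FConj (fm_subset y x) (FEx a (FMem a y))) (FEx b (FConj (FMem b y) (FAll a (FImp (FMem a y) (FNeg (FMem a b))))))))))))"
lemma sat_ordinal[simp]: "sat E s (fm_ordinal x) = ordinal_in E (s x)"
  by (simp add: fm_ordinal_def Let_def ordinal_in_def transitive_in_def)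

definition "fm_nat x = (let y = nx x x x in FConj (fm_ordinal x) (FConj (fm_zos x) (FAll y (FImp (FMem y x) (fm_zos y)))))"
lemma sat_nat[simp]: "sat E s (fm_nat x) = nat_in E (s x)"
  by (simp add: fm_nat_def Let_def nat_in_def)




lemma kur: "{{a},{a,b}} = {{a'},{a',b'}} \<Longrightarrow> a = a' \<and> b = b'"
  by (metis doubleton_eq_iff insert_absorb2 singleton_insert_inj_eq)

locale zf = fixes E :: "'a \<Rightarrow> 'a \<Rightarrow> bool" assumes ax: "ZFCm_DC E"
begin

lemma extensionality: "(\<And>z. E z x \<longleftrightarrow> E z y) \<Longrightarrow> x = y"
  using ax unfolding ZFCm_DC_def ax_extensionality_def by blast

lemma sepE: assumes "\<And>x. sat E (s(0:=x)) \<phi> = P x" shows "\<exists>b. \<forall>x. E x b \<longleftrightarrow> E x a \<and> P x"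
proof -
  have "ax_separation E" using ax unfolding ZFCm_DC_def by blast
  then obtain b where "\<forall>x. E x b \<longleftrightarrow> E x a \<and> sat E (s(0 := x)) \<phi>"
    unfolding ax_separation_def by blast
  then show ?thesis using assms by auto
qed

lemma foundE: assumes "\<And>x. sat E (s(0:=x)) \<phi> = P x" "P xx"
  shows "\<exists>y. P y \<and> (\<forall>z. P z \<longrightarrow> \<not> E z y)"
proof -
  have "ax_foundation E" using ax unfolding ZFCm_DC_def by blast
  moreover have "defcl E \<phi> s \<noteq> {}" using assms by (auto simp: defcl_def)
  ultimately obtain y where "y \<in> defcl E \<phi> s" "\<forall>z \<in> defcl E \<phi> s. \<not> E z y"
    unfolding ax_foundation_def by blast
  then show ?thesis using assms by (auto simp: defcl_def)
qed

lemma replE: assumes "\<And>x y. sat E (s(0:=x, 1:=y)) \<phi> = R x y" "\<forall>x. E x a \<longrightarrow> (\<exists>!y. R x y)"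
  shows "\<exists>b. \<forall>y. E y b \<longleftrightarrow> (\<exists>x. E x a \<and> R x y)"
proof -
  have "ax_replacement E" using ax unfolding ZFCm_DC_def by blast
  moreover have "\<forall>x. E x a \<longrightarrow> (\<exists>!y. sat E (s(0 := x, 1 := y)) \<phi>)" using assms by simp
  ultimately obtain b where "\<forall>y. E y b \<longleftrightarrow> (\<exists>x. E x a \<and> sat E (s(0 := x, 1 := y)) \<phi>)"
    unfolding ax_replacement_def by blast
  then show ?thesis using assms by auto
qed

lemma unionE: "\<exists>u. \<forall>z. E z u \<longleftrightarrow> (\<exists>y. E y x \<and> E z y)"
  using ax unfolding ZFCm_DC_def ax_union_def by blast

lemma emptyE: "\<exists>e. is_empty E e"
  using ax unfolding ZFCm_DC_def ax_empty_def by blast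

lemma upair_ex: "\<exists>u. upair_in E u a b"
  using ax unfolding ZFCm_DC_def ax_pairing_def by blast

lemma upair_uniq: "upair_in E u a b \<Longrightarrow> upair_in E u' a b \<Longrightarrow> u = u'"
  by (rule extensionality) (auto simp: upair_in_def)

lemma upair_ext: "upair_in E u a b \<longleftrightarrow> {z. E z u} = {a,b}"
  by (auto simp: upair_in_def)

lemma pair_ex: "\<exists>p. pair_in E p a b"
proof -
  obtain u where u: "upair_in E u a a" using upair_ex by blast
  obtain v where v: "upair_in E v a b" using upair_ex by blast
  obtain p where p: "upair_in E p u v" using upair_ex by blast
  have "pair_in E p a b" unfolding pair_in_def
  proof
    fix z show "E z p \<longleftrightarrow> upair_in E z a a \<or> upair_in E z a b"
      using p u v upair_uniq unfolding upair_in_def[of E p] by metis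
  qed
  then show ?thesis by blast
qed

lemma pair_uniq: "pair_in E p a b \<Longrightarrow> pair_in E p' a b \<Longrightarrow> p = p'"
  by (rule extensionality) (auto simp: pair_in_def)

lemma pair_img: assumes "pair_in E p a b" shows "(\<lambda>z. {w. E w z}) ` {z. E z p} = {{a},{a,b}}"
proof -
  obtain u where u: "upair_in E u a a" using upair_ex by blast
  obtain v where v: "upair_in E v a b" using upair_ex by blast
  have "E u p" "E v p" using assms u v by (auto simp: pair_in_def)
  moreover have "{w. E w u} = {a}" "{w. E w v} = {a,b}" using u v by (auto simp: upair_ext)
  moreover have "\<And>z. E z p \<Longrightarrow> {w. E w z} = {a} \<or> {w. E w z} = {a,b}"
    using assms by (auto simp: pair_in_def upair_ext)
  ultimately show ?thesis by blast
qed

lemma pair_inj: "pair_in E p a b \<Longrightarrow> pair_in E p a' b' \<Longrightarrow> a = a' \<and> b = b'"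
  using pair_img[of p a b] pair_img[of p a' b'] kur by metis

lemma rel_fst: "fun_on_in E f d \<Longrightarrow> rel_in E f a b \<Longrightarrow> E a d"
  unfolding fun_on_in_def rel_in_def using pair_inj by metis

lemma fun_val: "fun_on_in E f d \<Longrightarrow> E a d \<Longrightarrow> \<exists>b. rel_in E f a b"
  unfolding fun_on_in_def by blast

lemma fun_uniq: "fun_on_in E f d \<Longrightarrow> rel_in E f a b \<Longrightarrow> rel_in E f a b' \<Longrightarrow> b = b'"
  using rel_fst unfolding fun_on_in_def by metis

lemma ord_trans: "ordinal_in E x \<Longrightarrow> E z y \<Longrightarrow> E y x \<Longrightarrow> E z x"
  unfolding ordinal_in_def transitive_in_def by blast

lemma ord_irrefl: "ordinal_in E x \<Longrightarrow> \<not> E x x"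
  unfolding ordinal_in_def by blast

lemma ord_elem: assumes "ordinal_in E x" "E y x" shows "ordinal_in E y"
proof -
  have sub: "\<And>z. E z y \<Longrightarrow> E z x" using assms ord_trans by blast
  have x1: "\<forall>a. E a x \<longrightarrow> \<not> E a a" and
    x2: "\<forall>a b c. E a x \<and> E b x \<and> E c x \<and> E a b \<and> E b c \<longrightarrow> E a c" and
    x3: "\<forall>a b. E a x \<and> E b x \<longrightarrow> E a b \<or> a = b \<or> E b a" and
    x4: "\<forall>y. subset_in E y x \<and> (\<exists>z. E z y) \<longrightarrow> (\<exists>m. E m y \<and> (\<forall>z. E z y \<longrightarrow> \<not> E z m))"
    using assms(1) unfolding ordinal_in_def by blast+
  have t: "transitive_in E y" unfolding transitive_in_def
  proof (intro allI impI)
    fix a b assume h: "E a b \<and> E b y"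
    then have "E b x" using sub by blast
    then have "E a x" using h ord_trans[OF assms(1)] by blast
    then show "E a y" using x2 h \<open>E b x\<close> assms(2) by blast
  qed
  have s4: "\<forall>y'. subset_in E y' y \<and> (\<exists>z. E z y') \<longrightarrow> (\<exists>m. E m y' \<and> (\<forall>z. E z y' \<longrightarrow> \<not> E z m))"
    using x4 sub unfolding subset_in_def by blast
  have s1: "\<forall>a. E a y \<longrightarrow> \<not> E a a" using x1 sub by blast
  have s2: "\<forall>a b c. E a y \<and> E b y \<and> E c y \<and> E a b \<and> E b c \<longrightarrow> E a c" using x2 sub by blast
  have s3: "\<forall>a b. E a y \<and> E b y \<longrightarrow> E a b \<or> a = b \<or> E b a" using x3 sub by blast
  show ?thesis unfolding ordinal_in_def using t s1 s2 s3 s4 by (intro conjI)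
qed

lemma ord_lin: "ordinal_in E x \<Longrightarrow> E a x \<Longrightarrow> E b x \<Longrightarrow> E a b \<or> a = b \<or> E b a"
  unfolding ordinal_in_def by blast

lemma ord_min: "ordinal_in E x \<Longrightarrow> subset_in E y x \<Longrightarrow> E z y \<Longrightarrow> \<exists>m. E m y \<and> (\<forall>z. E z y \<longrightarrow> \<not> E z m)"
  unfolding ordinal_in_def by blast

lemma ord_L: assumes d: "ordinal_in E d" and x: "transitive_in E x" "\<And>z. E z x \<Longrightarrow> E z d" "x \<noteq> d"
  shows "E x d"
proof -
  obtain D where D: "\<forall>z. E z D \<longleftrightarrow> E z d \<and> \<not> E z x"
    using sepE[where s="\<lambda>_. x" and \<phi>="FNeg (FMem 0 1)" and P="\<lambda>z. \<not> E z x" and a=d] by auto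
  have "\<exists>z. E z D"
  proof (rule ccontr)
    assume "\<not> ?thesis"
    then have "\<And>z. E z x \<longleftrightarrow> E z d" using D x by blast
    then show False using extensionality x by blast
  qed
  then obtain m where m: "E m D" "\<forall>z. E z D \<longrightarrow> \<not> E z m"
    using ord_min[OF d, of D] D unfolding subset_in_def by blast
  have "m = x"
  proof (rule extensionality)
    fix w
    show "E w m \<longleftrightarrow> E w x"
    proof
      assume "E w m"
      then show "E w x" using m D ord_trans[OF d] by blast
    next
      assume w: "E w x"
      then have "E w d" using x by blast
      then have "E w m \<or> w = m \<or> E m w" using ord_lin[OF d] m D by blast
      then show "E w m" using m D w x(1) unfolding transitive_in_def by blast
    qed
  qed
  then show ?thesis using m D by blast
qed

lemma ord_cmp: assumes a: "ordinal_in E a" and b: "ordinal_in E b" shows "E a b \<or> a = b \<or> E b a"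
proof -
  obtain I where I: "\<forall>z. E z I \<longleftrightarrow> E z a \<and> E z b"
    using sepE[where s="\<lambda>_. b" and \<phi>="FMem 0 1" and P="\<lambda>z. E z b" and a=a] by auto
  have tI: "transitive_in E I" unfolding transitive_in_def using I ord_trans a b by blast
  have 1: "I = a \<or> E I a" using ord_L[OF a tI] I by blast
  have 2: "I = b \<or> E I b" using ord_L[OF b tI] I by blast
  have "\<not> (E I a \<and> E I b)" using I ord_irrefl[OF ord_elem[OF a]] by blast
  then show ?thesis using 1 2 I by metis
qed

lemma ord_sub: "ordinal_in E a \<Longrightarrow> ordinal_in E b \<Longrightarrow> (\<And>z. E z a \<Longrightarrow> E z b) \<Longrightarrow> E a b \<or> a = b"
  using ord_cmp ord_irrefl by blast

end


context zf begin

lemma set_min: "E z Y \<Longrightarrow> \<exists>m. E m Y \<and> (\<forall>z. E z Y \<longrightarrow> \<not> E z m)"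
  using foundE[where s="\<lambda>_. Y" and \<phi>="FMem 0 1" and P="\<lambda>z. E z Y"] by auto

lemma no_self: "\<not> E a a"
proof
  assume a: "E a a"
  obtain m where "m = a" "\<forall>z. z = a \<longrightarrow> \<not> E z m"
    using foundE[where s="\<lambda>_. a" and \<phi>="FEq 0 1" and P="\<lambda>z. z = a" and xx=a] by auto
  then show False using a by blast
qed

lemma ordI: assumes "transitive_in E x"
  "\<forall>a b c. E a x \<and> E b x \<and> E c x \<and> E a b \<and> E b c \<longrightarrow> E a c"
  "\<forall>a b. E a x \<and> E b x \<longrightarrow> E a b \<or> a = b \<or> E b a"
  shows "ordinal_in E x"
  unfolding ordinal_in_def using assms no_self set_min by blast

lemma empty_uniq: "is_empty E a \<Longrightarrow> is_empty E b \<Longrightarrow> a = b"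
  by (rule extensionality) (auto simp: is_empty_def)

lemma succ_uniq: "succ_in E y x \<Longrightarrow> succ_in E y' x \<Longrightarrow> y = y'"
  by (rule extensionality) (auto simp: succ_in_def)

lemma empty_nat: "is_empty E e \<Longrightarrow> nat_in E e"
proof -
  assume e: "is_empty E e"
  have "ordinal_in E e" by (rule ordI) (use e in \<open>auto simp: transitive_in_def is_empty_def\<close>)
  then show ?thesis using e unfolding nat_in_def zero_or_succ_in_def is_empty_def by blast
qed

lemma succ_ord: assumes x: "ordinal_in E x" and y: "succ_in E y x" shows "ordinal_in E y"
proof (rule ordI)
  show "transitive_in E y" unfolding transitive_in_def
  proof (intro allI impI)
    fix a b assume "E a b \<and> E b y"
    then show "E a y" using x y ord_trans[OF x] unfolding succ_in_def by blast
  qed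
  show "\<forall>a b c. E a y \<and> E b y \<and> E c y \<and> E a b \<and> E b c \<longrightarrow> E a c"
  proof (intro allI impI)
    fix a b c assume h: "E a y \<and> E b y \<and> E c y \<and> E a b \<and> E b c"
    have c: "E c x \<or> c = x" using h y by (simp add: succ_in_def)
    then show "E a c"
    proof
      assume cx: "E c x"
      then have "E b x" using h ord_trans[OF x] by blast
      then have "E a x" using h ord_trans[OF x] by blast
      then show ?thesis using cx \<open>E b x\<close> h x unfolding ordinal_in_def by meson
    next
      assume "c = x" then show ?thesis using h ord_trans[OF x] by blast
    qed
  qed
  show "\<forall>a b. E a y \<and> E b y \<longrightarrow> E a b \<or> a = b \<or> E b a"
  proof (intro allI impI)
    fix a b assume h: "E a y \<and> E b y"
    then have "(E a x \<or> a = x) \<and> (E b x \<or> b = x)" using y unfolding succ_in_def by blast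
    then show "E a b \<or> a = b \<or> E b a" using ord_lin[OF x] by blast
  qed
qed

lemma nat_ord: "nat_in E x \<Longrightarrow> ordinal_in E x" by (simp add: nat_in_def)

lemma nat_succ: assumes x: "nat_in E x" and y: "succ_in E y x" shows "nat_in E y"
  using x y succ_ord[OF nat_ord[OF x] y] unfolding nat_in_def zero_or_succ_in_def succ_in_def by blast

lemma nat_elem: assumes x: "nat_in E x" and y: "E y x" shows "nat_in E y"
proof -
  have "ordinal_in E y" using ord_elem nat_ord x y by blast
  then show ?thesis using x y ord_trans[OF nat_ord[OF x]] unfolding nat_in_def by blast
qed

lemma omega_ex: "\<exists>w. \<forall>x. E x w \<longleftrightarrow> nat_in E x"
proof -
  have "ax_infinity E" using ax unfolding ZFCm_DC_def by blast
  then obtain i where i0: "\<exists>e. is_empty E e \<and> E e i" and iS: "\<forall>y. E y i \<longrightarrow> (\<exists>z. succ_in E z y \<and> E z i)"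
    unfolding ax_infinity_def by blast
  have ni: "E n i" if n: "nat_in E n" for n
  proof (rule ccontr)
    assume "\<not> E n i"
    then obtain m where m: "nat_in E m \<and> \<not> E m i" and mm: "\<forall>z. nat_in E z \<and> \<not> E z i \<longrightarrow> \<not> E z m"
      using foundE[where s="\<lambda>_. i" and \<phi>="FConj (fm_nat 0) (FNeg (FMem 0 1))"
          and P="\<lambda>z. nat_in E z \<and> \<not> E z i" and xx=n] n by auto
    have "zero_or_succ_in E m" using m unfolding nat_in_def by blast
    then show False
    proof (unfold zero_or_succ_in_def, elim disjE exE)
      assume "is_empty E m" then show False using i0 m empty_uniq by blast
    next
      fix k assume k: "succ_in E m k"
      then have "E k m" by (simp add: succ_in_def)
      then have "E k i" using mm nat_elem m by blast
      then obtain z where "succ_in E z k" "E z i" using iS by blast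
      then show False using k succ_uniq m by blast
    qed
  qed
  obtain w where "\<forall>x. E x w \<longleftrightarrow> E x i \<and> nat_in E x"
    using sepE[where s="\<lambda>_. i" and \<phi>="fm_nat 0" and P="\<lambda>z. nat_in E z" and a=i] by auto
  then show ?thesis using ni by blast
qed

lemma omega_props: assumes w: "\<forall>x. E x w \<longleftrightarrow> nat_in E x"
  shows "ordinal_in E w" "\<not> nat_in E w"
proof -
  show o: "ordinal_in E w"
  proof (rule ordI)
    show "transitive_in E w" unfolding transitive_in_def using w nat_elem by blast
    show "\<forall>a b c. E a w \<and> E b w \<and> E c w \<and> E a b \<and> E b c \<longrightarrow> E a c"
      using w ord_trans nat_ord by blast
    show "\<forall>a b. E a w \<and> E b w \<longrightarrow> E a b \<or> a = b \<or> E b a"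
      using w ord_cmp nat_ord by blast
  qed
  show "\<not> nat_in E w" using w no_self by blast
qed

end


context zf begin

lemma mapE: assumes chi: "\<And>x p. sat E (s(0:=x,1:=p)) \<chi> = (\<exists>y. R x y \<and> pair_in E p x y)"
  and fn: "\<forall>x. E x D \<longrightarrow> (\<exists>!y. R x y)"
  shows "\<exists>G. fun_on_in E G D \<and> (\<forall>x y. rel_in E G x y \<longleftrightarrow> E x D \<and> R x y)"
proof -
  have "\<forall>x. E x D \<longrightarrow> (\<exists>!p. \<exists>y. R x y \<and> pair_in E p x y)"
  proof (intro allI impI)
    fix x assume "E x D"
    then obtain y where y: "R x y" "\<And>y'. R x y' \<Longrightarrow> y' = y" using fn by blast
    obtain p where "pair_in E p x y" using pair_ex by blast
    then show "\<exists>!p. \<exists>y. R x y \<and> pair_in E p x y" using y pair_uniq by blast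
  qed
  then obtain G where G: "\<forall>p. E p G \<longleftrightarrow> (\<exists>x. E x D \<and> (\<exists>y. R x y \<and> pair_in E p x y))"
    using replE[where s=s and \<phi>=\<chi> and R="\<lambda>x p. \<exists>y. R x y \<and> pair_in E p x y" and a=D] chi by blast
  have rel: "rel_in E G a b \<longleftrightarrow> E a D \<and> R a b" for a b
  proof
    assume "rel_in E G a b"
    then obtain p where "E p G" "pair_in E p a b" unfolding rel_in_def by blast
    then show "E a D \<and> R a b" using G pair_inj by metis
  next
    assume h: "E a D \<and> R a b"
    obtain p where "pair_in E p a b" using pair_ex by blast
    then show "rel_in E G a b" using G h unfolding rel_in_def by blast
  qed
  have "fun_on_in E G D" unfolding fun_on_in_def
  proof (intro conjI allI impI)
    fix p assume "E p G" then show "\<exists>a b. pair_in E p a b \<and> E a D" using G by blast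
  next
    fix a assume "E a D" then show "\<exists>!b. rel_in E G a b" using rel fn by blast
  qed
  then show ?thesis using rel by blast
qed

lemma restr_ex: "\<exists>g. restr_in E g f a"
proof -
  obtain g where "\<forall>p. E p g \<longleftrightarrow> E p f \<and> (\<exists>x y. pair_in E p x y \<and> E x a)"
    using sepE[where s="\<lambda>_. a" and \<phi>="FEx 2 (FEx 3 (FConj (fm_pair 0 2 3) (FMem 2 1)))"
        and P="\<lambda>p. \<exists>x y. pair_in E p x y \<and> E x a" and a=f] by auto
  then show ?thesis unfolding restr_in_def by blast
qed

lemma rel_restr: "restr_in E g f a \<Longrightarrow> rel_in E g x y \<longleftrightarrow> rel_in E f x y \<and> E x a"
proof
  assume g: "restr_in E g f a" and r: "rel_in E g x y"
  then obtain p where p: "E p g" "pair_in E p x y" unfolding rel_in_def by blast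
  then obtain x' y' where "E p f" "pair_in E p x' y'" "E x' a" using g unfolding restr_in_def by blast
  then show "rel_in E f x y \<and> E x a" using p pair_inj unfolding rel_in_def by blast
next
  assume g: "restr_in E g f a" and r: "rel_in E f x y \<and> E x a"
  then obtain p where p: "E p f" "pair_in E p x y" unfolding rel_in_def by blast
  then show "rel_in E g x y" using g r unfolding restr_in_def rel_in_def by blast
qed

lemma fun_restr: assumes f: "fun_on_in E f d" and g: "restr_in E g f a" and a: "\<And>z. E z a \<Longrightarrow> E z d"
  shows "fun_on_in E g a"
  unfolding fun_on_in_def
proof (intro conjI allI impI)
  fix p assume "E p g" then show "\<exists>x y. pair_in E p x y \<and> E x a" using g unfolding restr_in_def by blast
next
  fix x assume x: "E x a"
  obtain y where y: "rel_in E f x y" using fun_val[OF f a[OF x]] by blast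
  show "\<exists>!y. rel_in E g x y"
  proof (rule ex1I[of _ y])
    show "rel_in E g x y" using rel_restr[OF g] y x by blast
  next
    fix y' assume "rel_in E g x y'"
    then have "rel_in E f x y'" using rel_restr[OF g] by blast
    then show "y' = y" using fun_uniq[OF f] y by blast
  qed
qed

lemma succ_ex: "\<exists>y. succ_in E y x"
proof -
  obtain u where u: "upair_in E u x x" using upair_ex by blast
  obtain p where p: "upair_in E p x u" using upair_ex by blast
  obtain y where y: "\<forall>z. E z y \<longleftrightarrow> (\<exists>v. E v p \<and> E z v)" using unionE by blast
  have pu: "\<And>v. E v p \<longleftrightarrow> v = x \<or> v = u" using p unfolding upair_in_def by blast
  have uu: "\<And>z. E z u \<longleftrightarrow> z = x" using u unfolding upair_in_def by blast
  have "succ_in E y x" unfolding succ_in_def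
  proof
    fix z
    have "E z y \<longleftrightarrow> (\<exists>v. (v = x \<or> v = u) \<and> E z v)" using y pu by blast
    also have "\<dots> \<longleftrightarrow> E z x \<or> z = x" using uu by blast
    finally show "E z y \<longleftrightarrow> E z x \<or> z = x" .
  qed
  then show ?thesis by blast
qed

lemma omega_bound: assumes w: "\<forall>x. E x w \<longleftrightarrow> nat_in E x"
  and n: "E n w" and F: "fun_on_in E F n" and Fw: "\<forall>x y. rel_in E F x y \<longrightarrow> E y w"
  shows "\<exists>m. E m w \<and> (\<forall>x y. E x n \<and> rel_in E F x y \<longrightarrow> E y m)"
proof (rule ccontr)
  let ?P = "\<lambda>n. E n w \<and> (\<exists>F. fun_on_in E F n \<and> (\<forall>x y. rel_in E F x y \<longrightarrow> E y w) \<and>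
     \<not> (\<exists>m. E m w \<and> (\<forall>x y. E x n \<and> rel_in E F x y \<longrightarrow> E y m)))"
  assume "\<not> ?thesis"
  then have "?P n" using n F Fw by blast
  then obtain k where Pk: "?P k" and km: "\<forall>z. ?P z \<longrightarrow> \<not> E z k"
    using foundE[where s="\<lambda>_. w" and P="?P" and xx=n and \<phi>="FConj (FMem 0 1) (FEx 2 (FConj (fm_fun_on 2 0)
       (FConj (FAll 3 (FAll 4 (FImp (fm_rel 2 3 4) (FMem 4 1))))
        (FNeg (FEx 5 (FConj (FMem 5 1) (FAll 3 (FAll 4 (FImp (FConj (FMem 3 0) (fm_rel 2 3 4)) (FMem 4 5))))))))))"]
    by auto
  then obtain G where G: "fun_on_in E G k" "\<forall>x y. rel_in E G x y \<longrightarrow> E y w"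
     "\<not> (\<exists>m. E m w \<and> (\<forall>x y. E x k \<and> rel_in E G x y \<longrightarrow> E y m))" by blast
  have kn: "nat_in E k" using Pk w by blast
  then have "zero_or_succ_in E k" unfolding nat_in_def by blast
  then show False unfolding zero_or_succ_in_def
  proof (elim disjE exE)
    assume "is_empty E k"
    moreover obtain e where "is_empty E e" using emptyE by blast
    ultimately show False using G(3) w empty_nat unfolding is_empty_def by blast
  next
    fix j assume j: "succ_in E k j"
    have jk: "E j k" using j by (simp add: succ_in_def)
    have jw: "E j w" using w nat_elem[OF kn jk] by blast
    obtain H where H: "restr_in E H G j" using restr_ex by blast
    have Hf: "fun_on_in E H j" using fun_restr[OF G(1) H] j unfolding succ_in_def by blast
    have Hw: "\<forall>x y. rel_in E H x y \<longrightarrow> E y w" using rel_restr[OF H] G(2) by blast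
    have "\<not> ?P j" using km jk by blast
    then obtain m where m: "E m w" "\<forall>x y. E x j \<and> rel_in E H x y \<longrightarrow> E y m"
      using jw Hf Hw by blast
    obtain v where v: "rel_in E G j v" using fun_val[OF G(1) jk] by blast
    have vw: "E v w" using v G(2) by blast
    have xk: "\<And>x. E x k \<Longrightarrow> E x j \<or> x = j" using j by (simp add: succ_in_def)
    have lowG: "\<And>x y. E x j \<Longrightarrow> rel_in E G x y \<Longrightarrow> E y m" using m rel_restr[OF H] by blast
    have vo: "ordinal_in E v" "ordinal_in E m" using vw m w nat_ord by blast+
    have "E v m \<or> (v = m \<or> E m v)" using ord_cmp[OF vo] .
    then show False
    proof
      assume vm: "E v m"
      have "\<forall>x y. E x k \<and> rel_in E G x y \<longrightarrow> E y m"
        using xk lowG vm v fun_uniq[OF G(1)] by blast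
      then show False using G(3) m by blast
    next
      assume vm: "v = m \<or> E m v"
      obtain v' where v': "succ_in E v' v" using succ_ex by blast
      have v'w: "E v' w" using nat_succ[OF _ v'] vw w by blast
      have "\<forall>x y. E x k \<and> rel_in E G x y \<longrightarrow> E y v'"
      proof (intro allI impI)
        fix x y assume h: "E x k \<and> rel_in E G x y"
        show "E y v'"
        proof (cases "x = j")
          case True then have "y = v" using h v fun_uniq[OF G(1)] by blast
          then show ?thesis using v' by (simp add: succ_in_def)
        next
          case False then have "E y m" using h xk lowG by blast
          then have "E y v" using vm ord_trans[OF vo(1)] by blast
          then show ?thesis using v' by (simp add: succ_in_def)
        qed
      qed
      then show False using G(3) v'w by blast
    qed
  qed
qed

lemma omega_nosurj: assumes w: "\<forall>x. E x w \<longleftrightarrow> nat_in E x"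
  and n: "E n w" and F: "fun_on_in E F n" and Fw: "\<forall>x y. rel_in E F x y \<longrightarrow> E y w"
  and onto: "\<forall>y. E y w \<longrightarrow> (\<exists>x. rel_in E F x y)"
  shows False
proof -
  obtain m where m: "E m w" "\<forall>x y. E x n \<and> rel_in E F x y \<longrightarrow> E y m" using omega_bound[OF w n F Fw] by blast
  then obtain x where "rel_in E F x m" using onto by blast
  then show False using m rel_fst[OF F] no_self by blast
qed

end


context zf begin

lemma card_ex: assumes g: "ordinal_in E \<gamma>" and b0: "E b0 \<gamma>"
  shows "\<exists>\<mu> h. inf_cardinal_in E \<mu> \<and> fun_on_in E h \<mu> \<and> (\<forall>a c. rel_in E h a c \<longrightarrow> E c \<gamma>)
            \<and> (\<forall>c. E c \<gamma> \<longrightarrow> (\<exists>a. rel_in E h a c))"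
proof -
  obtain w where w: "\<forall>x. E x w \<longleftrightarrow> nat_in E x" using omega_ex by blast
  have wo: "ordinal_in E w" and wn: "\<not> nat_in E w" using omega_props[OF w] by auto
  obtain e where e: "is_empty E e" using emptyE by blast
  have ew: "E e w" using w empty_nat[OF e] by blast
  define \<delta> where "\<delta> = (if subset_in E w \<gamma> then \<gamma> else w)"
  have gw: "subset_in E w \<gamma> \<or> E \<gamma> w"
    using ord_cmp[OF g wo] ord_trans[OF g] unfolding subset_in_def by blast
  have do: "ordinal_in E \<delta>" using g wo \<delta>_def by auto
  have dw: "subset_in E w \<delta>" using \<delta>_def unfolding subset_in_def by auto
  have dg: "subset_in E \<gamma> \<delta>" using \<delta>_def gw ord_trans[OF wo] unfolding subset_in_def by auto
  have "\<exists>G. fun_on_in E G \<delta> \<and> (\<forall>x y. rel_in E G x y \<longleftrightarrow> E x \<delta> \<and> ((E x \<gamma> \<and> y = x) \<or> (\<not> E x \<gamma> \<and> y = b0)))"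
    by (rule mapE[where s="(\<lambda>_. \<gamma>)(3:=b0)" and \<chi>="FEx 4 (FConj (FOr (FConj (FMem 0 2) (FEq 4 0)) (FConj (FNeg (FMem 0 2)) (FEq 4 3))) (fm_pair 1 0 4))"])
      auto
  then obtain h0 where h0: "fun_on_in E h0 \<delta>" "\<forall>x y. rel_in E h0 x y \<longleftrightarrow> E x \<delta> \<and> ((E x \<gamma> \<and> y = x) \<or> (\<not> E x \<gamma> \<and> y = b0))"
    by blast
  let ?K = "\<lambda>x. (E x \<delta> \<or> x = \<delta>) \<and> subset_in E w x \<and> (\<exists>h. fun_on_in E h x \<and> (\<forall>a c. rel_in E h a c \<longrightarrow> E c \<gamma>) \<and> (\<forall>c. E c \<gamma> \<longrightarrow> (\<exists>a. rel_in E h a c)))"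
  have K0: "?K \<delta>"
  proof -
    have "\<forall>a c. rel_in E h0 a c \<longrightarrow> E c \<gamma>" using h0(2) b0 by auto
    moreover have "\<forall>c. E c \<gamma> \<longrightarrow> (\<exists>a. rel_in E h0 a c)" using h0(2) dg unfolding subset_in_def by blast
    ultimately show ?thesis using h0(1) dw by blast
  qed
  obtain \<mu> where K\<mu>: "?K \<mu>" and \<mu>min: "\<forall>z. ?K z \<longrightarrow> \<not> E z \<mu>"
    using foundE[where s="(\<lambda>_. \<delta>)(2:=w, 3:=\<gamma>)" and P="?K" and xx=\<delta> and \<phi>="FConj (FOr (FMem 0 1) (FEq 0 1)) (FConj (fm_subset 2 0) (FEx 4 (FConj (fm_fun_on 4 0) (FConj (FAll 5 (FAll 6 (FImp (fm_rel 4 5 6) (FMem 6 3)))) (FAll 6 (FImp (FMem 6 3) (FEx 5 (fm_rel 4 5 6))))))))"]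
      K0 by auto
  obtain h where h: "fun_on_in E h \<mu>" "\<forall>a c. rel_in E h a c \<longrightarrow> E c \<gamma>" "\<forall>c. E c \<gamma> \<longrightarrow> (\<exists>a. rel_in E h a c)"
    using K\<mu> by blast
  have mo: "ordinal_in E \<mu>" using K\<mu> do ord_elem by blast
  have mw: "subset_in E w \<mu>" using K\<mu> by blast
  have mn: "\<not> nat_in E \<mu>"
  proof
    assume "nat_in E \<mu>" then have "E \<mu> w" using w by blast
    then show False using mw no_self unfolding subset_in_def by blast
  qed
  have md: "\<And>z. E z \<mu> \<Longrightarrow> E z \<delta>" using K\<mu> ord_trans[OF do] by blast
  have card: "\<not> bij_in E F b \<mu>" if b: "E b \<mu>" for b F
  proof
    assume bij: "bij_in E F b \<mu>"
    have F: "fun_on_in E F b" "\<forall>a c. rel_in E F a c \<longrightarrow> E c \<mu>" "\<forall>c. E c \<mu> \<longrightarrow> (\<exists>a. rel_in E F a c)"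
      using bij unfolding bij_in_def by blast+
    have bo: "ordinal_in E b" using ord_elem[OF mo b] .
    show False
    proof (cases "subset_in E w b")
      case True
      have fnc: "\<forall>x. E x b \<longrightarrow> (\<exists>!y. \<exists>z. rel_in E F x z \<and> rel_in E h z y)"
      proof (intro allI impI)
        fix x assume x: "E x b"
        obtain z where z: "rel_in E F x z" using fun_val[OF F(1) x] by blast
        then have "E z \<mu>" using F(2) by blast
        then obtain y where y: "rel_in E h z y" using fun_val[OF h(1)] by blast
        show "\<exists>!y. \<exists>z. rel_in E F x z \<and> rel_in E h z y"
        proof (rule ex1I[of _ y])
          show "\<exists>z. rel_in E F x z \<and> rel_in E h z y" using z y by blast
        next
          fix y' assume "\<exists>z. rel_in E F x z \<and> rel_in E h z y'"
          then obtain z' where "rel_in E F x z'" "rel_in E h z' y'" by blast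
          then show "y' = y" using z y fun_uniq[OF F(1)] fun_uniq[OF h(1)] by metis
        qed
      qed
      have "\<exists>G. fun_on_in E G b \<and> (\<forall>x y. rel_in E G x y \<longleftrightarrow> E x b \<and> (\<exists>z. rel_in E F x z \<and> rel_in E h z y))"
        by (rule mapE[where s="(\<lambda>_. F)(3:=h)" and \<chi>="FEx 5 (FConj (FEx 6 (FConj (fm_rel 2 0 6) (fm_rel 3 6 5))) (fm_pair 1 0 5))"])
          (use fnc in auto)
      then obtain G where G: "fun_on_in E G b" "\<forall>x y. rel_in E G x y \<longleftrightarrow> E x b \<and> (\<exists>z. rel_in E F x z \<and> rel_in E h z y)"
        by blast
      have "\<forall>a c. rel_in E G a c \<longrightarrow> E c \<gamma>" using G(2) h(2) by blast
      moreover have "\<forall>c. E c \<gamma> \<longrightarrow> (\<exists>a. rel_in E G a c)"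
      proof (intro allI impI)
        fix c assume "E c \<gamma>"
        then obtain z where z: "rel_in E h z c" using h(3) by blast
        then have "E z \<mu>" using rel_fst[OF h(1)] by blast
        then obtain x where x: "rel_in E F x z" using F(3) by blast
        then have "E x b" using rel_fst[OF F(1)] by blast
        then show "\<exists>a. rel_in E G a c" using G(2) x z by blast
      qed
      ultimately have "?K b" using G(1) True md b by blast
      then show False using \<mu>min b by blast
    next
      case False
      have bw: "E b w" using ord_cmp[OF bo wo] False ord_trans[OF bo] unfolding subset_in_def by blast
      have fnc: "\<forall>x. E x b \<longrightarrow> (\<exists>!y. \<exists>z. rel_in E F x z \<and> ((E z w \<and> y = z) \<or> (\<not> E z w \<and> y = e)))"
      proof (intro allI impI)
        fix x assume x: "E x b"
        obtain z where z: "rel_in E F x z" using fun_val[OF F(1) x] by blast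
        show "\<exists>!y. \<exists>z. rel_in E F x z \<and> ((E z w \<and> y = z) \<or> (\<not> E z w \<and> y = e))"
          using z fun_uniq[OF F(1)] by blast
      qed
      have "\<exists>G. fun_on_in E G b \<and> (\<forall>x y. rel_in E G x y \<longleftrightarrow> E x b \<and> (\<exists>z. rel_in E F x z \<and> ((E z w \<and> y = z) \<or> (\<not> E z w \<and> y = e))))"
        by (rule mapE[where s="(\<lambda>_. F)(3:=w, 4:=e)" and \<chi>="FEx 5 (FConj (FEx 6 (FConj (fm_rel 2 0 6) (FOr (FConj (FMem 6 3) (FEq 5 6)) (FConj (FNeg (FMem 6 3)) (FEq 5 4))))) (fm_pair 1 0 5))"])
          (use fnc in auto)
      then obtain G where G: "fun_on_in E G b" "\<forall>x y. rel_in E G x y \<longleftrightarrow> E x b \<and> (\<exists>z. rel_in E F x z \<and> ((E z w \<and> y = z) \<or> (\<not> E z w \<and> y = e)))"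
        by blast
      have "\<forall>x y. rel_in E G x y \<longrightarrow> E y w" using G(2) ew by blast
      moreover have "\<forall>y. E y w \<longrightarrow> (\<exists>x. rel_in E G x y)"
      proof (intro allI impI)
        fix y assume yw: "E y w"
        then have "E y \<mu>" using mw unfolding subset_in_def by blast
        then obtain x where x: "rel_in E F x y" using F(3) by blast
        then have "E x b" using rel_fst[OF F(1)] by blast
        then show "\<exists>x. rel_in E G x y" using G(2) x yw by blast
      qed
      ultimately show False using omega_nosurj[OF w bw G(1)] by blast
    qed
  qed
  have "inf_cardinal_in E \<mu>" unfolding inf_cardinal_in_def cardinal_in_def using mo mn card by blast
  then show ?thesis using h by blast
qed

end



fun mv :: "fm \<Rightarrow> nat" where
  "mv (FMem i j) = max i j"
| "mv (FEq i j) = max i j"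
| "mv (FNeg p) = mv p"
| "mv (FConj p q) = max (mv p) (mv q)"
| "mv (FEx x p) = max x (mv p)"

lemma sat_cong: "(\<forall>v \<le> mv p. s v = s' v) \<Longrightarrow> sat E s p = sat E s' p"
proof (induction p arbitrary: s s')
  case (FEx x p)
  have "\<And>a. sat E (s(x:=a)) p = sat E (s'(x:=a)) p"
    using FEx.IH FEx.prems by auto
  then show ?case by simp
next
  case (FConj p1 p2)
  then have "sat E s p1 = sat E s' p1" "sat E s p2 = sat E s' p2" by auto
  then show ?case by simp
qed auto

context zf begin

lemma dc_inj: assumes pc: "proper_class E (defcl E p s)" and mu: "inf_cardinal_in E \<mu>"
  shows "\<exists>f. fun_on_in E f \<mu> \<and> (\<forall>\<alpha> x. rel_in E f \<alpha> x \<longrightarrow> sat E (s(0:=x)) p)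
     \<and> (\<forall>\<alpha> \<alpha>' x. rel_in E f \<alpha> x \<and> rel_in E f \<alpha>' x \<longrightarrow> \<alpha> = \<alpha>')"
proof -
  let ?q = "FNeg (FEx 2 (fm_rel 0 2 1))"
  have dc: "ax_DC E \<mu>" using ax mu unfolding ZFCm_DC_def by blast
  have notset: "\<not> (\<exists>b. \<forall>x. sat E (s(0:=x)) p \<longleftrightarrow> E x b)"
    using pc unfolding proper_class_def is_set_cl_def defcl_def by auto
  have ne: "\<exists>y. sat E (s(0:=y)) p"
  proof (rule ccontr)
    assume "\<not> ?thesis"
    moreover obtain e where "is_empty E e" using emptyE by blast
    ultimately show False using notset unfolding is_empty_def by blast
  qed
  have step: "\<exists>z. sat E (s(0 := z)) p \<and> sat E (s(0 := sq, 1 := z)) ?q" for sq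
  proof (rule ccontr)
    assume "\<not> ?thesis"
    then have all: "\<forall>z. sat E (s(0 := z)) p \<longrightarrow> (\<exists>\<beta>. rel_in E sq \<beta> z)" by simp
    obtain U1 where U1: "\<forall>z. E z U1 \<longleftrightarrow> (\<exists>y. E y sq \<and> E z y)" using unionE by blast
    obtain U2 where U2: "\<forall>z. E z U2 \<longleftrightarrow> (\<exists>y. E y U1 \<and> E z y)" using unionE by blast
    have inU: "E z U2" if zC: "sat E (s(0 := z)) p" for z
    proof -
      obtain \<beta> pp where pp: "E pp sq" "pair_in E pp \<beta> z" using all zC unfolding rel_in_def by blast
      obtain u where u: "upair_in E u \<beta> z" using upair_ex by blast
      have "E u pp" using pp u unfolding pair_in_def by blast
      moreover have "E z u" using u unfolding upair_in_def by blast
      ultimately show ?thesis using U1 U2 pp by blast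
    qed
    obtain b where "\<forall>x. E x b \<longleftrightarrow> E x U2 \<and> sat E (s(0:=x)) p"
      using sepE[where s=s and \<phi>=p and P="\<lambda>x. sat E (s(0:=x)) p" and a=U2] by blast
    then show False using notset inU by blast
  qed
  obtain f where f: "fun_on_in E f \<mu>" and fp: "\<forall>\<alpha> x. E \<alpha> \<mu> \<and> rel_in E f \<alpha> x \<longrightarrow>
       sat E (s(0 := x)) p \<and> (\<exists>g. restr_in E g f \<alpha> \<and> sat E (s(0 := g, 1 := x)) ?q)"
    using dc ne step unfolding ax_DC_def by blast
  have mo: "ordinal_in E \<mu>" using mu unfolding inf_cardinal_in_def cardinal_in_def by blast
  have lt: "False" if h: "rel_in E f \<alpha> x" "rel_in E f \<alpha>' x" "E \<alpha>' \<alpha>" for \<alpha> \<alpha>' x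
  proof -
    have "E \<alpha> \<mu>" using h rel_fst[OF f] by blast
    then have "\<exists>g. restr_in E g f \<alpha> \<and> sat E (s(0 := g, 1 := x)) ?q" using fp h(1) by blast
    then obtain g where g: "restr_in E g f \<alpha>" "\<not> (\<exists>\<beta>. rel_in E g \<beta> x)" by auto
    then show False using rel_restr[OF g(1)] h by blast
  qed
  have "\<forall>\<alpha> \<alpha>' x. rel_in E f \<alpha> x \<and> rel_in E f \<alpha>' x \<longrightarrow> \<alpha> = \<alpha>'"
  proof (intro allI impI)
    fix \<alpha> \<alpha>' x assume h: "rel_in E f \<alpha> x \<and> rel_in E f \<alpha>' x"
    then have "E \<alpha> \<mu>" "E \<alpha>' \<mu>" using rel_fst[OF f] by blast+
    then have "E \<alpha> \<alpha>' \<or> \<alpha> = \<alpha>' \<or> E \<alpha>' \<alpha>" using ord_lin[OF mo] by blast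
    then show "\<alpha> = \<alpha>'" using lt h by blast
  qed
  moreover have "\<forall>\<alpha> x. rel_in E f \<alpha> x \<longrightarrow> sat E (s(0:=x)) p" using fp rel_fst[OF f] by blast
  ultimately show ?thesis using f by blast
qed

end

lemma sat_q:
  fixes N :: nat
  assumes N: "N = Suc (Suc (mv p))"
  shows "sat E ((s(N := s 1, Suc N := f, Suc (Suc N) := h, Suc (Suc (Suc N)) := b0))(0:=a, 1:=b))
     (FConj (FEx 1 (FConj (FEq 1 N) p))
       (FOr (FEx (N+4) (FConj (fm_rel (Suc N) (N+4) 0) (fm_rel (Suc (Suc N)) (N+4) 1)))
            (FConj (FNeg (FEx (N+4) (fm_rel (Suc N) (N+4) 0))) (FEq 1 (Suc (Suc (Suc N)))))))
   = (sat E (s(0:=a)) p \<and> ((\<exists>\<alpha>. rel_in E f \<alpha> a \<and> rel_in E h \<alpha> b) \<or> (\<not>(\<exists>\<alpha>. rel_in E f \<alpha> a) \<and> b = b0)))"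
proof -
  have c: "sat E ((s(N := s 1, Suc N := f, Suc (Suc N) := h, Suc (Suc (Suc N)) := b0))(0:=a, 1:=s 1)) p = sat E (s(0:=a)) p"
    by (rule sat_cong) (auto simp: N)
  show ?thesis using c by (simp add: N)
qed

theorem corollary6p5:
  fixes E :: "'a \<Rightarrow> 'a \<Rightarrow> bool" and p :: fm and s :: "nat \<Rightarrow> 'a" and \<gamma> :: 'a
  assumes "ZFCm_DC E"
    and "proper_class E (defcl E p s)"
    and "ordinal_in E \<gamma>"
    and "\<exists>x. E x \<gamma>"
  shows "\<exists>q t. def_surj_onto E q t (defcl E p s) \<gamma>"
proof -
  interpret zf E by standard (rule assms(1))
  obtain b0 where b0: "E b0 \<gamma>" using assms(4) by blast
  obtain \<mu> h where mu: "inf_cardinal_in E \<mu>" and h: "fun_on_in E h \<mu>" "\<forall>a c. rel_in E h a c \<longrightarrow> E c \<gamma>"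
     "\<forall>c. E c \<gamma> \<longrightarrow> (\<exists>a. rel_in E h a c)"
    using card_ex[OF assms(3) b0] by blast
  obtain f where f: "fun_on_in E f \<mu>" "\<forall>\<alpha> x. rel_in E f \<alpha> x \<longrightarrow> sat E (s(0:=x)) p"
     "\<forall>\<alpha> \<alpha>' x. rel_in E f \<alpha> x \<and> rel_in E f \<alpha>' x \<longrightarrow> \<alpha> = \<alpha>'"
    using dc_inj[OF assms(2) mu] by blast
  define N where "N = Suc (Suc (mv p))"
  define t where "t = s(N := s 1, Suc N := f, Suc (Suc N) := h, Suc (Suc (Suc N)) := b0)"
  define q where "q = (FConj (FEx 1 (FConj (FEq 1 N) p))
       (FOr (FEx (N+4) (FConj (fm_rel (Suc N) (N+4) 0) (fm_rel (Suc (Suc N)) (N+4) 1)))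
            (FConj (FNeg (FEx (N+4) (fm_rel (Suc N) (N+4) 0))) (FEq 1 (Suc (Suc (Suc N)))))))"
  let ?C = "defcl E p s"
  have sq: "sat E (t(0:=a, 1:=b)) q \<longleftrightarrow> a \<in> ?C \<and> ((\<exists>\<alpha>. rel_in E f \<alpha> a \<and> rel_in E h \<alpha> b) \<or> (\<not>(\<exists>\<alpha>. rel_in E f \<alpha> a) \<and> b = b0))"
    for a b
  proof -
    have "sat E (t(0:=a, 1:=b)) q = (sat E (s(0:=a)) p \<and> ((\<exists>\<alpha>. rel_in E f \<alpha> a \<and> rel_in E h \<alpha> b) \<or> (\<not>(\<exists>\<alpha>. rel_in E f \<alpha> a) \<and> b = b0)))"
      unfolding q_def t_def by (rule sat_q[OF N_def])
    then show ?thesis by (simp only: defcl_def mem_Collect_eq)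
  qed
  have "def_surj_onto E q t ?C \<gamma>"
    unfolding def_surj_onto_def
  proof (intro conjI)
    show "\<forall>a b. sat E (t(0 := a, 1 := b)) q \<longrightarrow> a \<in> ?C \<and> E b \<gamma>" using sq h(2) b0 by blast
  next
    show "\<forall>a\<in>?C. \<exists>!b. sat E (t(0 := a, 1 := b)) q"
    proof
    fix a assume a: "a \<in> ?C"
    show "\<exists>!b. sat E (t(0 := a, 1 := b)) q"
    proof (cases "\<exists>\<alpha>. rel_in E f \<alpha> a")
      case True
      then obtain \<alpha> where al: "rel_in E f \<alpha> a" by blast
      then have "E \<alpha> \<mu>" using rel_fst[OF f(1)] by blast
      then obtain b where b: "rel_in E h \<alpha> b" using fun_val[OF h(1)] by blast
      show ?thesis
      proof (rule ex1I[of _ b])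
        show "sat E (t(0 := a, 1 := b)) q" using sq a al b by blast
      next
        fix b' assume "sat E (t(0 := a, 1 := b')) q"
        then obtain \<alpha>' where "rel_in E f \<alpha>' a" "rel_in E h \<alpha>' b'" using sq True by blast
        then show "b' = b" using al b f(3) fun_uniq[OF h(1)] by blast
      qed
    next
      case False
      show ?thesis
      proof (rule ex1I[of _ b0])
        show "sat E (t(0 := a, 1 := b0)) q" using sq a False by blast
      next
        fix b' assume "sat E (t(0 := a, 1 := b')) q"
        then show "b' = b0" using sq False by blast
      qed
    qed
    qed
  next
    show "\<forall>b. E b \<gamma> \<longrightarrow> (\<exists>a\<in>?C. sat E (t(0 := a, 1 := b)) q)"
    proof (intro allI impI)
    fix b assume "E b \<gamma>"
    then obtain \<alpha> where al: "rel_in E h \<alpha> b" using h(3) by blast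
    then have "E \<alpha> \<mu>" using rel_fst[OF h(1)] by blast
    then obtain a where a: "rel_in E f \<alpha> a" using fun_val[OF f(1)] by blast
    then have "a \<in> ?C" using f(2) by (simp add: defcl_def)
    then show "\<exists>a\<in>?C. sat E (t(0 := a, 1 := b)) q" using sq a al by blast
    qed
  qed
  then show ?thesis by blast
qed



end
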